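(* Let $b\ge3$, $1\le j\le b-1$, $\ell\in\{2,\dots,b\}$. For $i=1,\dots,\ell$ let $I_i=[a_i,b_i]\subseteq[0,1]$ be nonempty intervals, fix numbers $\bar p_{\ell+1},\dots,\bar p_b$, and fix a probability vector $\bar q\in\mathbb R^b$ with $\bar q_1=\bar q_2=\dots=\bar q_\ell$. Let $D$ be the set of pairs $(p,\bar q)$ where $p$ is a probability vector in $\mathbb R^b$ with $p_i\in I_i$ for $i\le\ell$ and $p_i=\bar p_i$ for $i>\ell$. If $(\bar p;\bar q)\in D$ is a maximum point of $\Psi_j$ on $D$, then either $\bar p_1=\bar p_2=\dots=\bar p_\ell$, or the maximum of $\Psi_j$ on $D$ is also attained at some point $(p';\bar q)\in D$ with $p'_i\in\{a_i,b_i\}$ for some $i\in\{1,\dots,\ell\}$.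
   Context: For an integer $1\le j\le b-1$ and vectors $p,q\in\mathbb R^b$, $$\Psi_j(p;q)=\frac{1}{(b-j-1)!}\sum_{\sigma\in S_b}\Big(p_{\sigma(1)}\cdots p_{\sigma(j)}\,q_{\sigma(j+1)}+q_{\sigma(1)}\cdots q_{\sigma(j)}\,p_{\sigma(j+1)}\Big),$$ where $S_b$ is the set of permutations of $\{1,\dots,b\}$. *)

theory Defs
  imports "HOL-Analysis.Analysis" "HOL-Combinatorics.Permutations"
begin

text \<open>Vectors in R^b are represented as functions nat => real, indexed by {1..b}.\<close>

definition Psi :: "nat \<Rightarrow> nat \<Rightarrow> (nat \<Rightarrow> real) \<Rightarrow> (nat \<Rightarrow> real) \<Rightarrow> real" where
  "Psi b j p q = (1 / fact (b - j - 1)) *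
     (\<Sum>\<sigma> | \<sigma> permutes {1..b}.
        (\<Prod>k=1..j. p (\<sigma> k)) * q (\<sigma> (j+1)) + (\<Prod>k=1..j. q (\<sigma> k)) * p (\<sigma> (j+1)))"

definition prob_vec :: "nat \<Rightarrow> (nat \<Rightarrow> real) \<Rightarrow> bool" where
  "prob_vec b p \<longleftrightarrow> (\<forall>i\<in>{1..b}. 0 \<le> p i) \<and> (\<Sum>i=1..b. p i) = 1"

text \<open>The first components of the pairs in D (the second component is always qbar).\<close>
definition Dset :: "nat \<Rightarrow> nat \<Rightarrow> (nat \<Rightarrow> real) \<Rightarrow> (nat \<Rightarrow> real) \<Rightarrow> (nat \<Rightarrow> real) \<Rightarrow> (nat \<Rightarrow> real) set" where
  "Dset b l a bb pbar = {p. prob_vec b p \<and> (\<forall>i\<in>{1..l}. a i \<le> p i \<and> p i \<le> bb i)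
                          \<and> (\<forall>i\<in>{l+1..b}. p i = pbar i)}"

end

theory Submission imports Defs "HOL-Computational_Algebra.Polynomial" begin

lemma psi_swap:
  assumes "\<tau> permutes {1..b}" "\<And>x. q (\<tau> x) = q x"
  shows "Psi b j (p \<circ> \<tau>) q = Psi b j p q"
proof -
  let ?F = "\<lambda>\<sigma>. (\<Prod>k=1..j. p (\<sigma> k)) * q (\<sigma> (j+1)) + (\<Prod>k=1..j. q (\<sigma> k)) * p (\<sigma> (j+1))"
  have "sum ?F {\<sigma>. \<sigma> permutes {1..b}} = sum (\<lambda>\<sigma>. ?F (\<tau> \<circ> \<sigma>)) {\<sigma>. \<sigma> permutes {1..b}}"
    by (rule setum_permutations_compose_left[OF assms(1)])
  then show ?thesis unfolding Psi_def by (simp add: assms(2))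
qed

lemma deg_lin: "degree [:a, c:] \<le> (if c = 0 then 0 else 1)"
  by simp

lemma psi_poly:
  assumes fin: "finite W" and cW: "card W \<le> 2" and wW: "\<And>x. x \<notin> W \<Longrightarrow> w x = 0"
  shows "\<exists>P. degree P \<le> 2 \<and> (\<forall>t. Psi b j (\<lambda>x. pb x + w x * t) q = poly P t)"
proof -
  define P where "P = smult (1 / fact (b - j - 1)) (\<Sum>\<sigma> | \<sigma> permutes {1..b}.
        (\<Prod>k=1..j. [:pb (\<sigma> k), w (\<sigma> k):]) * [:q (\<sigma> (j+1)):] + [:(\<Prod>k=1..j. q (\<sigma> k)):] * [:pb (\<sigma> (j+1)), w (\<sigma> (j+1)):])"
  have ev: "\<forall>t. Psi b j (\<lambda>x. pb x + w x * t) q = poly P t"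
    unfolding P_def Psi_def by (simp add: poly_sum poly_prod algebra_simps)
  have dg: "degree P \<le> 2"
    unfolding P_def
  proof (rule order_trans[OF degree_smult_le], rule degree_sum_le)
    show "finite {\<sigma>. \<sigma> permutes {1..b}}" by (simp add: finite_permutations)
  next
    fix \<sigma> assume "\<sigma> \<in> {\<sigma>. \<sigma> permutes {1..b}}"
    then have sp: "\<sigma> permutes {1..b}" by simp
    let ?A = "{m \<in> {1..j}. w (\<sigma> m) \<noteq> 0}"
    have sub: "?A \<subseteq> inv \<sigma> ` W"
    proof
      fix m assume "m \<in> ?A"
      then have "\<sigma> m \<in> W" using wW by auto
      moreover have "inv \<sigma> (\<sigma> m) = m" using permutes_inverses(2)[OF sp] by simp
      ultimately show "m \<in> inv \<sigma> ` W" by force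
    qed
    have cA: "card ?A \<le> 2"
      using card_mono[OF finite_imageI[OF fin] sub] card_image_le[OF fin, of "inv \<sigma>"] cW by linarith
    have "degree (\<Prod>k=1..j. [:pb (\<sigma> k), w (\<sigma> k):]) \<le> (\<Sum>k=1..j. degree [:pb (\<sigma> k), w (\<sigma> k):])"
      using degree_prod_sum_le[of "{1..j}" "\<lambda>k. [:pb (\<sigma> k), w (\<sigma> k):]"] by (simp add: o_def)
    also have "\<dots> \<le> (\<Sum>k=1..j. if w (\<sigma> k) = 0 then 0 else 1)"
      by (rule sum_mono) (simp)
    also have "\<dots> = card ?A"
      by (simp add: sum.If_cases; rule arg_cong[of _ _ card]; auto)
    finally have d1: "degree (\<Prod>k=1..j. [:pb (\<sigma> k), w (\<sigma> k):]) \<le> 2" using cA by linarith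
    have d2: "degree ((\<Prod>k=1..j. [:pb (\<sigma> k), w (\<sigma> k):]) * [:q (\<sigma> (j+1)):]) \<le> 2"
      using order_trans[OF degree_mult_le] d1 by simp
    have d3: "degree ([:(\<Prod>k=1..j. q (\<sigma> k)):] * [:pb (\<sigma> (j+1)), w (\<sigma> (j+1)):]) \<le> 2"
      using order_trans[OF degree_mult_le] by simp
    show "degree ((\<Prod>k=1..j. [:pb (\<sigma> k), w (\<sigma> k):]) * [:q (\<sigma> (j+1)):] + [:(\<Prod>k=1..j. q (\<sigma> k)):] * [:pb (\<sigma> (j+1)), w (\<sigma> (j+1)):]) \<le> 2"
      using degree_add_le[OF d2 d3] .
  qed
  show ?thesis using ev dg by blast
qed

lemma quad:
  fixes P :: "real poly"
  assumes "degree P \<le> 2"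
  shows "poly P t = coeff P 0 + coeff P 1 * t + coeff P 2 * t^2"
proof -
  have "poly P t = (\<Sum>i\<le>2. coeff P i * t ^ i)"
    unfolding poly_altdef
    by (rule sum.mono_neutral_left) (use assms le_degree in auto)
  then show ?thesis by (simp add: numeral_2_eq_2)
qed

lemma c2zero:
  fixes c2 d e :: real
  assumes "0 < e" "e < \<bar>d\<bar>" "c2 * (e^2 - d*e) \<le> 0" "c2 * (e^2 + d*e) \<le> 0"
  shows "c2 = 0"
proof (cases "d > 0")
  case True
  have "e^2 - d*e < 0" using assms True by (simp add: power2_eq_square mult_strict_right_mono algebra_simps)
  moreover have "e^2 + d*e > 0" using assms True by (simp add: power2_eq_square add_pos_pos)
  ultimately show ?thesis using assms(3,4) by (metis linorder_neqE_linordered_idom mult_neg_neg mult_pos_pos not_le mult_pos_neg mult_neg_pos)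
next
  case False
  have "e^2 + d*e = e*(e+d)" by (simp add: power2_eq_square algebra_simps)
  moreover have "e + d < 0" using assms False by linarith
  ultimately have "e^2 + d*e < 0" using assms(1) by (simp add: mult_pos_neg)
  moreover have "e^2 - d*e > 0" using assms False by (simp add: power2_eq_square add_pos_pos)
  ultimately show ?thesis using assms(3,4) by (metis linorder_neqE_linordered_idom mult_neg_neg mult_pos_pos not_le mult_pos_neg mult_neg_pos)
qed

theorem mainTheorem6:
  fixes b j l :: nat and a bb pbar qbar :: "nat \<Rightarrow> real"
  assumes "b \<ge> 3" and "1 \<le> j" and "j \<le> b - 1" and "2 \<le> l" and "l \<le> b"
    and "\<forall>i\<in>{1..l}. 0 \<le> a i \<and> a i \<le> bb i \<and> bb i \<le> 1"
    and "prob_vec b qbar" and "\<forall>i\<in>{1..l}. qbar i = qbar 1"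
    and "pbar \<in> Dset b l a bb pbar"
    and "\<forall>p\<in>Dset b l a bb pbar. Psi b j p qbar \<le> Psi b j pbar qbar"
  shows "(\<forall>i\<in>{1..l}. pbar i = pbar 1) \<or>
         (\<exists>p'\<in>Dset b l a bb pbar. Psi b j p' qbar = Psi b j pbar qbar \<and>
             (\<exists>i\<in>{1..l}. p' i = a i \<or> p' i = bb i))"
proof (cases "\<forall>i\<in>{1..l}. pbar i = pbar 1")
  case True then show ?thesis by blast
next
  case False
  then obtain i where i: "i \<in> {1..l}" "pbar i \<noteq> pbar 1" by blast
  have i1: "i \<noteq> 1" using i by auto
  have one: "(1::nat) \<in> {1..l}" using assms(4) by auto
  have pD: "prob_vec b pbar" "\<forall>x\<in>{1..l}. a x \<le> pbar x \<and> pbar x \<le> bb x"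
    using assms(9) unfolding Dset_def by auto
  define w :: "nat \<Rightarrow> real" where "w x = (if x = i then 1 else if x = 1 then -1 else 0)" for x
  define pt where "pt t = (\<lambda>x. pbar x + w x * t)" for t
  have pt0: "pt 0 = pbar" by (simp add: pt_def)
  have cw: "card {i, 1::nat} \<le> 2" by (simp add: card_insert_if)
  have ww: "\<And>x. x \<notin> {i,1} \<Longrightarrow> w x = 0" by (simp add: w_def)
  obtain P where P: "degree P \<le> 2" "\<forall>t. Psi b j (\<lambda>x. pbar x + w x * t) qbar = poly P t"
    using psi_poly[where W="{i,1}" and w=w and pb=pbar and b=b and j=j and q=qbar] cw ww by blast
  define c0 c1 c2 where "c0 = coeff P 0" "c1 = coeff P 1" "c2 = coeff P 2"
  have f: "Psi b j (pt t) qbar = c0 + c1 * t + c2 * t^2" for t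
    using P quad[OF P(1)] unfolding pt_def c0_c1_c2_def by simp
  define d where "d = pbar 1 - pbar i"
  have d0: "d \<noteq> 0" using i(2) by (simp add: d_def)
  have ib: "i \<in> {1..b}" "(1::nat) \<in> {1..b}" using i one assms(5) by auto
  define \<tau> where "\<tau> = Transposition.transpose i 1"
  have tp: "\<tau> permutes {1..b}" unfolding \<tau>_def by (rule permutes_swap_id[OF ib])
  have qt: "qbar (\<tau> x) = qbar x" for x
  proof -
    have "qbar i = qbar 1" using assms(8) i by blast
    then show ?thesis unfolding \<tau>_def
      by (cases "x = i"; cases "x = 1") auto
  qed
  have ptsw: "pt (d - t) = pt t \<circ> \<tau>" for t
  proof (rule ext)
    fix x show "pt (d - t) x = (pt t \<circ> \<tau>) x" unfolding \<tau>_def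
      using i1 by (cases "x = i"; cases "x = 1") (auto simp: pt_def w_def d_def)
  qed
  have sym: "Psi b j (pt (d - t)) qbar = Psi b j (pt t) qbar" for t
    using psi_swap[where q=qbar and j=j and p="pt t", OF tp qt] ptsw by simp
  have c1: "c1 * d + c2 * d^2 = 0"
    using sym[of 0] f[of 0] f[of d] by simp
  have sw: "(\<Sum>x=1..b. w x) = 0"
  proof -
    have "(\<Sum>x=1..b. w x) = (\<Sum>x\<in>{i,1}. w x)"
      by (rule sum.mono_neutral_right) (use ib in \<open>auto simp: w_def\<close>)
    then show ?thesis using i1 by (simp add: w_def)
  qed
  have inD: "pt t \<in> Dset b l a bb pbar"
    if t: "a i \<le> pbar i + t" "pbar i + t \<le> bb i" "a 1 \<le> pbar 1 - t" "pbar 1 - t \<le> bb 1" for t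
  proof -
    have nn: "0 \<le> pt t x" if "x \<in> {1..b}" for x
    proof -
      have "0 \<le> pbar x" using pD(1) that unfolding prob_vec_def by auto
      moreover have "0 \<le> a i" "0 \<le> a 1" using assms(6) i one by auto
      ultimately show ?thesis using t i1 by (auto simp: pt_def w_def)
    qed
    have "(\<Sum>x=1..b. pt t x) = (\<Sum>x=1..b. pbar x) + (\<Sum>x=1..b. w x) * t"
      by (simp add: pt_def sum.distrib sum_distrib_right)
    then have "(\<Sum>x=1..b. pt t x) = 1" using pD(1) sw unfolding prob_vec_def by simp
    moreover have "\<forall>x\<in>{1..l}. a x \<le> pt t x \<and> pt t x \<le> bb x"
      using pD(2) t i1 by (auto simp: pt_def w_def)
    moreover have "\<forall>x\<in>{l+1..b}. pt t x = pbar x"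
      using i one by (auto simp: pt_def w_def)
    ultimately show ?thesis using nn unfolding Dset_def prob_vec_def by blast
  qed
  define lo where "lo = max (a i - pbar i) (pbar 1 - bb 1)"
  define hi where "hi = min (bb i - pbar i) (pbar 1 - a 1)"
  have inD': "pt t \<in> Dset b l a bb pbar" if "lo \<le> t" "t \<le> hi" for t
    by (rule inD) (use that in \<open>auto simp: lo_def hi_def\<close>)
  have le: "c1 * t + c2 * t^2 \<le> 0" if "lo \<le> t" "t \<le> hi" for t
    using assms(10) inD'[OF that] f[of t] f[of 0] pt0 by force
  have lo0: "lo \<le> 0" and hi0: "0 \<le> hi" using pD(2) i one by (auto simp: lo_def hi_def)
  show ?thesis
  proof (cases "hi = 0 \<or> lo = 0")
    case True
    then have "pbar i = a i \<or> pbar i = bb i \<or> pbar 1 = a 1 \<or> pbar 1 = bb 1"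
      unfolding lo_def hi_def by (auto simp: max_def min_def split: if_splits)
    then show ?thesis using assms(9) i one by blast
  next
    case False
    then have lh: "lo < 0" "0 < hi" using lo0 hi0 by auto
    define e where "e = min (min hi (-lo)) (\<bar>d\<bar>/2)"
    have e: "0 < e" "e < \<bar>d\<bar>" "e \<le> hi" "lo \<le> -e" using lh d0 by (auto simp: e_def)
    have "d * (c1 + c2 * d) = 0" using c1 by (simp add: power2_eq_square algebra_simps)
    then have "c1 + c2 * d = 0" using d0 by simp
    then have c1e: "c1 = - c2 * d" by simp
    have A: "c2 * (e^2 - d*e) \<le> 0" using le[of e] e lh c1e by (simp add: algebra_simps)
    have B: "c2 * (e^2 + d*e) \<le> 0" using le[of "-e"] e lh c1e by (simp add: algebra_simps)
    have "c2 = 0" by (rule c2zero[OF e(1,2) A B])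
    then have "c1 = 0" using c1e by simp
    then have eq: "Psi b j (pt hi) qbar = Psi b j pbar qbar"
      using f[of hi] f[of 0] pt0 \<open>c2 = 0\<close> by simp
    have "pt hi i = bb i \<or> pt hi 1 = a 1"
      unfolding pt_def w_def hi_def using i1 by (auto simp: min_def)
    moreover have "pt hi \<in> Dset b l a bb pbar" using inD'[of hi] lh by simp
    ultimately show ?thesis using eq i one by blast
  qed
qed
end
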